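(* Let $n>2$ be an integer and $M\in\mathrm{Mat}(2,\mathbb{Z})$ with $\det(M)\equiv-1\pmod n$, and suppose $M$ is reversible mod $n$. Then $M^2\equiv\mathbb{1}\pmod n$ if $n$ is odd, and $M^2\equiv\mathbb{1}\pmod{n/2}$ if $n$ is even.
   Context: An integer matrix $M$ whose determinant is a unit mod $n$ is reversible mod $n$ if there exists $R\in\mathrm{GL}(2,\mathbb{Z}/n\mathbb{Z})$ with $RMR^{-1}\equiv M^{-1}\pmod n$, where $M^{-1}$ is the inverse of $M$ over $\mathbb{Z}/n\mathbb{Z}$. *)

theory Defs
  imports "HOL-Analysis.Analysis" "HOL-Number_Theory.Cong"
begin

definition mat_cong :: "int \<Rightarrow> int^2^2 \<Rightarrow> int^2^2 \<Rightarrow> bool" where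
  "mat_cong n A B \<longleftrightarrow> (\<forall>i j. [A $ i $ j = B $ i $ j] (mod n))"

definition is_inv_mod :: "int \<Rightarrow> int^2^2 \<Rightarrow> int^2^2 \<Rightarrow> bool" where
  "is_inv_mod n A N \<longleftrightarrow> mat_cong n (A ** N) (mat 1) \<and> mat_cong n (N ** A) (mat 1)"

definition reversible_mod :: "int \<Rightarrow> int^2^2 \<Rightarrow> bool" where
  "reversible_mod n M \<longleftrightarrow> coprime (det M) n \<and>
     (\<exists>R Rinv Minv. is_inv_mod n R Rinv \<and> is_inv_mod n M Minv \<and>
        mat_cong n (R ** M ** Rinv) Minv)"

end

theory Submission
  imports Defs
begin

lemma mat_cong_iff:
  "mat_cong n A B \<longleftrightarrow>
     n dvd (A$1$1 - B$1$1) \<and> n dvd (A$1$2 - B$1$2) \<and> n dvd (A$2$1 - B$2$1) \<and> n dvd (A$2$2 - B$2$2)"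
  unfolding mat_cong_def forall_2 cong_iff_dvd_diff by blast

lemma mmult2: "(A ** (B::int^2^2)) $ i $ j = A$i$1 * B$1$j + A$i$2 * B$2$j"
  by (simp add: matrix_matrix_mult_def sum_2)

lemma mat1_2: "(mat 1 :: int^2^2)$1$1 = 1" "(mat 1 :: int^2^2)$2$2 = 1"
  "(mat 1 :: int^2^2)$1$2 = 0" "(mat 1 :: int^2^2)$2$1 = 0"
  by (simp_all add: mat_def)

theorem corollary4p10:
  fixes n :: int and M :: "int^2^2"
  assumes "n > 2"
    and "[det M = -1] (mod n)"
    and "reversible_mod n M"
  shows "(odd n \<longrightarrow> mat_cong n (M ** M) (mat 1)) \<and>
         (even n \<longrightarrow> mat_cong (n div 2) (M ** M) (mat 1))"
proof -
  obtain R Rinv Minv where inv: "is_inv_mod n R Rinv" "is_inv_mod n M Minv"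
    and cj: "mat_cong n (R ** M ** Rinv) Minv"
    using assms(3) unfolding reversible_mod_def by blast
  define a where "a = M$1$1"
  define b where "b = M$1$2"
  define c where "c = M$2$1"
  define d where "d = M$2$2"
  define pp where "pp = Minv$1$1"
  define qq where "qq = Minv$1$2"
  define rr where "rr = Minv$2$1"
  define ss where "ss = Minv$2$2"
  define t where "t = a + d"
  have det: "n dvd (a*d - b*c + 1)"
    using assms(2) unfolding cong_iff_dvd_diff det_2 a_def b_def c_def d_def by simp
  have mi: "n dvd (a*pp + b*rr - 1)" "n dvd (a*qq + b* ss)" "n dvd (c*pp + d*rr)" "n dvd (c*qq+d* ss - 1)"
    using inv(2) unfolding is_inv_mod_def mat_cong_iff mmult2 mat1_2 a_def b_def c_def d_def
      pp_def qq_def rr_def ss_def by auto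
  have hp: "n dvd (pp + d)"
  proof -
    have "pp + d = pp * (a*d - b*c + 1) - d*(a*pp + b*rr - 1) + b*(c*pp + d*rr)" by algebra
    thus ?thesis using det mi by simp
  qed
  have hs: "n dvd (ss + a)"
  proof -
    have "ss + a = ss * (a*d - b*c + 1) - a*(c*qq+d* ss - 1) + c*(a*qq + b* ss)" by algebra
    thus ?thesis using det mi by simp
  qed
  define X where "X = Rinv ** R"
  have ri: "n dvd (X$1$1 - 1)" "n dvd X$1$2" "n dvd X$2$1" "n dvd (X$2$2 - 1)"
    using inv(1) unfolding is_inv_mod_def mat_cong_iff mat1_2 X_def by auto
  have tr: "(R ** M ** Rinv)$1$1 + (R ** M ** Rinv)$2$2 = (X ** M)$1$1 + (X ** M)$2$2"
    unfolding X_def mmult2 by algebra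
  have tr2: "n dvd ((X ** M)$1$1 + (X ** M)$2$2 - t)"
  proof -
    have "(X ** M)$1$1 + (X ** M)$2$2 - t = (X$1$1 - 1)*a + X$1$2 * c + X$2$1 * b + (X$2$2 - 1)*d"
      unfolding mmult2 t_def a_def b_def c_def d_def by algebra
    thus ?thesis using ri by simp
  qed
  have cjd: "n dvd ((R ** M ** Rinv)$1$1 - pp)" "n dvd ((R ** M ** Rinv)$2$2 - ss)"
    using cj unfolding mat_cong_iff pp_def ss_def by auto
  have t2: "n dvd (2*t)"
  proof -
    have "2*t = (pp+d) + (ss+a) - ((X ** M)$1$1 + (X ** M)$2$2 - t) + ((R ** M ** Rinv)$1$1 - pp)
       + ((R ** M ** Rinv)$2$2 - ss)"
      using tr unfolding t_def by algebra
    thus ?thesis using hp hs tr2 cjd by (metis dvd_add dvd_diff)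
  qed
  have fin: "mat_cong m (M ** M) (mat 1)" if "m dvd t" "m dvd n" for m
  proof -
    have dm: "m dvd (a*d - b*c + 1)" using det that(2) by (rule dvd_trans[rotated])
    have e: "(M**M)$1$1 - 1 = a*t - (a*d - b*c + 1)" "(M**M)$1$2 = b*t" "(M**M)$2$1 = c*t"
      "(M**M)$2$2 - 1 = d*t - (a*d - b*c + 1)"
      unfolding mmult2 t_def a_def b_def c_def d_def by algebra+
    show ?thesis unfolding mat_cong_iff mat1_2 e using dm that(1)
      by (simp add: dvd_diff)
  qed
  show ?thesis
  proof (intro conjI impI)
    assume "odd n"
    hence "coprime n 2" by simp
    hence "n dvd t" using t2 by (metis coprime_dvd_mult_right_iff)
    thus "mat_cong n (M ** M) (mat 1)" using fin by simp
  next
    assume "even n"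
    then obtain k where k: "n = 2*k" by blast
    have "k dvd t" using t2 k by simp
    thus "mat_cong (n div 2) (M ** M) (mat 1)" using fin k by simp
  qed
qed

end
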